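(* Let $\mathcal{X}_1,\mathcal{X}_2$ be non-empty sets, $\mathcal{B}_1\subseteq\mathcal{P}(\mathcal{X}_1)\setminus\{\emptyset\}$, $\mathcal{B}_2\subseteq\mathcal{P}(\mathcal{X}_2)\setminus\{\emptyset\}$ (arbitrary, possibly empty), and for $i\in\{1,2\}$ let $\underline{P}_i$ be a coherent conditional lower prevision on $\mathcal{C}_i\subseteq\mathcal{C}(\mathcal{X}_i)$ with natural extension $\underline{E}_i$ to $\mathcal{C}(\mathcal{X}_i)$. Then for any $f\in\mathcal{G}(\mathcal{X}_1)$ and $h\in\mathcal{G}(\mathcal{X}_2)$, $$(\underline{P}_1\otimes\underline{P}_2)(f+h)=\underline{E}_1(f)+\underline{E}_2(h).$$
   Context: Gambles on a non-empty set $\mathcal{X}$ are bounded real functions; $\mathcal{G}(\mathcal{X})$ is the set of gambles, $\mathcal{G}_{>0}(\mathcal{X})$ the non-negative non-zero gambles, $\mathbb{I}_A$ the indicator of $A$. For $\mathcal{A}\subseteq\mathcal{G}(\mathcal{X})$: $\mathrm{posi}(\mathcal{A}):=\{\sum_{i=1}^n\lambda_if_i\colon n\in\mathbb{N},\lambda_i>0,f_i\in\mathcal{A}\}$, $\mathcal{E}(\mathcal{A}):=\mathrm{posi}(\mathcal{A}\cup\mathcal{G}_{>0}(\mathcal{X}))$. A coherent set of desirable gambles $\mathcal{D}\subseteq\mathcal{G}(\mathcal{X})$ satisfies: (D1) $f\geq0,f\neq0\Rightarrow f\in\mathcal{D}$; (D2) $f\in\mathcal{D},\lambda>0\Rightarrow\lambda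 f\in\mathcal{D}$; (D3) $f,g\in\mathcal{D}\Rightarrow f+g\in\mathcal{D}$; (D4) $f\leq0\Rightarrow f\notin\mathcal{D}$. $\mathcal{C}(\mathcal{X}):=\mathcal{G}(\mathcal{X})\times(\mathcal{P}(\mathcal{X})\setminus\{\emptyset\})$; a conditional lower prevision on $\mathcal{C}\subseteq\mathcal{C}(\mathcal{X})$ is a map $(f,B)\mapsto\underline{P}(f\vert B)\in\mathbb{R}\cup\{\pm\infty\}$. For $\mathcal{D}\subseteq\mathcal{G}(\mathcal{X})$, $\underline{P}_{\mathcal{D}}(f\vert B):=\sup\{\mu\in\mathbb{R}\colon[f-\mu]\mathbb{I}_B\in\mathcal{D}\}$. $\underline{P}$ is coherent if $\underline{P}=\underline{P}_{\mathcal{D}}$ on its domain for some coherent set of desirable gambles $\mathcal{D}$. For coherent $\underline{P}$ on $\mathcal{C}$, $\mathcal{E}(\underline{P}):=\mathcal{E}(\{[f-\mu]\mathbb{I}_B\colon(f,B)\in\mathcal{C},\mu<\underline{P}(f\vert B)\})$ and its natural extension is $\underline{E}(f\vert B):=\underline{P}_{\mathcal{E}(\underline{P})}(f\vert B)$ for all $(f,B)\in\mathcal{C}(\mathcal{X})$. Unconditional notation: $\underline{P}(f):=\underline{P}(f\vert\mathcal{X})$. Gambles on $\mathcal{X}_i$ are identified with their cylindrical extensions to $\mathcal{X}_1\times\mathcal{X}_2$, events $B\subseteq\mathcal{X}_1$ with $B\times\mathcal{X}_2$ (similarly for $\mathcal{X}_2$). For coherent sets of desirable gambles $\mathcal{D}_1,\mathcal{D}_2$: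 $\mathcal{D}_1\otimes\mathcal{D}_2:=\mathcal{E}(\mathcal{A}_{1\to2}\cup\mathcal{A}_{2\to1})$, $\mathcal{A}_{1\to2}:=\{f_2(X_2)\mathbb{I}_{B_1}(X_1)\colon f_2\in\mathcal{D}_2,B_1\in\mathcal{B}_1\cup\{\mathcal{X}_1\}\}$, $\mathcal{A}_{2\to1}:=\{f_1(X_1)\mathbb{I}_{B_2}(X_2)\colon f_1\in\mathcal{D}_1,B_2\in\mathcal{B}_2\cup\{\mathcal{X}_2\}\}$. Then $(\underline{P}_1\otimes\underline{P}_2)(f\vert B):=\underline{P}_{\mathcal{D}}(f\vert B)$ for $(f,B)\in\mathcal{C}(\mathcal{X}_1\times\mathcal{X}_2)$ with $\mathcal{D}=\mathcal{E}(\underline{P}_1)\otimes\mathcal{E}(\underline{P}_2)$. *)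

theory Defs
  imports Complex_Main "HOL-Library.Extended_Real" "HOL-Library.Indicator_Function"
begin

text \<open>Possibility spaces are modelled as (automatically non-empty) types; the
  whole space is UNIV. Gambles are bounded real-valued functions.\<close>

definition gamble :: "('a \<Rightarrow> real) \<Rightarrow> bool" where
  "gamble f \<longleftrightarrow> (\<exists>c. \<forall>x. \<bar>f x\<bar> \<le> c)"

definition gambles :: "('a \<Rightarrow> real) set" where
  "gambles = {f. gamble f}"

definition gambles_pos :: "('a \<Rightarrow> real) set" where
  "gambles_pos = {f. gamble f \<and> (\<forall>x. f x \<ge> 0) \<and> f \<noteq> (\<lambda>x. 0)}"

definition posi :: "('a \<Rightarrow> real) set \<Rightarrow> ('a \<Rightarrow> real) set" where
  "posi A = {g. \<exists>(n::nat) (lam::nat \<Rightarrow> real) (fs::nat \<Rightarrow> 'a \<Rightarrow> real).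
      n > 0 \<and> (\<forall>i<n. lam i > 0 \<and> fs i \<in> A) \<and> g = (\<lambda>x. \<Sum>i<n. lam i * fs i x)}"

definition natext_set :: "('a \<Rightarrow> real) set \<Rightarrow> ('a \<Rightarrow> real) set" ("\<E>") where
  "\<E> A = posi (A \<union> gambles_pos)"

definition coherent_D :: "('a \<Rightarrow> real) set \<Rightarrow> bool" where
  "coherent_D D \<longleftrightarrow> D \<subseteq> gambles \<and>
     (\<forall>f. gamble f \<and> (\<forall>x. f x \<ge> 0) \<and> f \<noteq> (\<lambda>x. 0) \<longrightarrow> f \<in> D) \<and>
     (\<forall>f \<in> D. \<forall>c::real. c > 0 \<longrightarrow> (\<lambda>x. c * f x) \<in> D) \<and>
     (\<forall>f \<in> D. \<forall>g \<in> D. (\<lambda>x. f x + g x) \<in> D) \<and>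
     (\<forall>f. gamble f \<and> (\<forall>x. f x \<le> 0) \<longrightarrow> f \<notin> D)"

definition cond_domain :: "(('a \<Rightarrow> real) \<times> 'a set) set" where
  "cond_domain = {(f, B). gamble f \<and> B \<noteq> {}}"

text \<open>Lower prevision induced by a set of gambles: values in the extended reals
  (Sup of the empty set is -\<infinity>).\<close>
definition lowprev_D :: "('a \<Rightarrow> real) set \<Rightarrow> ('a \<Rightarrow> real) \<Rightarrow> 'a set \<Rightarrow> ereal" where
  "lowprev_D D f B = Sup {ereal \<mu> | \<mu>. (\<lambda>x. (f x - \<mu>) * indicator B x) \<in> D}"

definition coherent_lp :: "(('a \<Rightarrow> real) \<times> 'a set) set \<Rightarrow> (('a \<Rightarrow> real) \<Rightarrow> 'a set \<Rightarrow> ereal) \<Rightarrow> bool" where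
  "coherent_lp C P \<longleftrightarrow> C \<subseteq> cond_domain \<and>
     (\<exists>D. coherent_D D \<and> (\<forall>(f, B) \<in> C. P f B = lowprev_D D f B))"

definition E_lp :: "(('a \<Rightarrow> real) \<times> 'a set) set \<Rightarrow> (('a \<Rightarrow> real) \<Rightarrow> 'a set \<Rightarrow> ereal) \<Rightarrow> ('a \<Rightarrow> real) set" where
  "E_lp C P = \<E> {(\<lambda>x. (f x - \<mu>) * indicator B x) | f B \<mu>. (f, B) \<in> C \<and> ereal \<mu> < P f B}"

definition natext :: "(('a \<Rightarrow> real) \<times> 'a set) set \<Rightarrow> (('a \<Rightarrow> real) \<Rightarrow> 'a set \<Rightarrow> ereal) \<Rightarrow> ('a \<Rightarrow> real) \<Rightarrow> 'a set \<Rightarrow> ereal" where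
  "natext C P f B = lowprev_D (E_lp C P) f B"

text \<open>Independent product of coherent sets of desirable gambles w.r.t. the
  conditioning families B1, B2 (cylindrical extensions made explicit).\<close>
definition prod_D :: "'a set set \<Rightarrow> 'b set set \<Rightarrow> ('a \<Rightarrow> real) set \<Rightarrow> ('b \<Rightarrow> real) set
    \<Rightarrow> ('a \<times> 'b \<Rightarrow> real) set" where
  "prod_D B1 B2 D1 D2 = \<E>
     ({(\<lambda>(x, y). f2 y * indicator A1 x) | f2 A1. f2 \<in> D2 \<and> A1 \<in> B1 \<union> {UNIV}} \<union>
      {(\<lambda>(x, y). f1 x * indicator A2 y) | f1 A2. f1 \<in> D1 \<and> A2 \<in> B2 \<union> {UNIV}})"

definition prod_lp :: "'a set set \<Rightarrow> 'b set set
    \<Rightarrow> (('a \<Rightarrow> real) \<times> 'a set) set \<Rightarrow> (('a \<Rightarrow> real) \<Rightarrow> 'a set \<Rightarrow> ereal)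
    \<Rightarrow> (('b \<Rightarrow> real) \<times> 'b set) set \<Rightarrow> (('b \<Rightarrow> real) \<Rightarrow> 'b set \<Rightarrow> ereal)
    \<Rightarrow> ('a \<times> 'b \<Rightarrow> real) \<Rightarrow> ('a \<times> 'b) set \<Rightarrow> ereal" where
  "prod_lp B1 B2 C1 P1 C2 P2 f B = lowprev_D (prod_D B1 B2 (E_lp C1 P1) (E_lp C2 P2)) f B"

end

theory Submission
  imports Defs
begin


lemma sum_split_add: "(\<Sum>i<n+m. g i) = (\<Sum>i<n. g i) + (\<Sum>i<m. g (n+i)) " for g :: "nat \<Rightarrow> real"
  by (induction m) (auto simp: add.assoc)

lemma gamble_add: "gamble u \<Longrightarrow> gamble v \<Longrightarrow> gamble (\<lambda>x. u x + v x)"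
  unfolding gamble_def
proof -
  assume "\<exists>c. \<forall>x. \<bar>u x\<bar> \<le> c" "\<exists>c. \<forall>x. \<bar>v x\<bar> \<le> c"
  then obtain a b where "\<forall>x. \<bar>u x\<bar> \<le> a" "\<forall>x. \<bar>v x\<bar> \<le> b" by blast
  then have "\<forall>x. \<bar>u x + v x\<bar> \<le> a + b" by (meson abs_triangle_ineq add_mono order_trans)
  then show "\<exists>c. \<forall>x. \<bar>u x + v x\<bar> \<le> c" by blast
qed

lemma gamble_mult: "gamble u \<Longrightarrow> gamble v \<Longrightarrow> gamble (\<lambda>x. u x * v x)"
  unfolding gamble_def
proof -
  assume "\<exists>c. \<forall>x. \<bar>u x\<bar> \<le> c" "\<exists>c. \<forall>x. \<bar>v x\<bar> \<le> c"
  then obtain a b where a: "\<forall>x. \<bar>u x\<bar> \<le> a" and b: "\<forall>x. \<bar>v x\<bar> \<le> b" by blast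
  have "\<forall>x. \<bar>u x * v x\<bar> \<le> a * b"
  proof
    fix x
    have "\<bar>u x * v x\<bar> = \<bar>u x\<bar> * \<bar>v x\<bar>" by (simp add: abs_mult)
    also have "\<dots> \<le> a * b" using a b by (meson abs_ge_zero mult_mono order_trans)
    finally show "\<bar>u x * v x\<bar> \<le> a * b" .
  qed
  then show "\<exists>c. \<forall>x. \<bar>u x * v x\<bar> \<le> c" by blast
qed

lemma gamble_const: "gamble (\<lambda>x. c)"
  unfolding gamble_def by blast

lemma gamble_cmult: "gamble u \<Longrightarrow> gamble (\<lambda>x. c * u x)"
  using gamble_mult[OF gamble_const] by blast

lemma gamble_diff: "gamble u \<Longrightarrow> gamble v \<Longrightarrow> gamble (\<lambda>x. u x - v x)"
  using gamble_add[of u "\<lambda>x. (-1) * v x"] gamble_cmult[of v "-1"] by simp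

lemma gamble_minus: "gamble u \<Longrightarrow> gamble (\<lambda>x. - u x)"
  using gamble_cmult[of u "-1"] by simp

lemma gamble_indicator: "gamble (indicator A :: _ \<Rightarrow> real)"
  unfolding gamble_def by (rule exI[of _ 1]) (simp add: indicator_def)

lemma gamble_sum: "(\<And>i. i \<in> I \<Longrightarrow> gamble (g i)) \<Longrightarrow> gamble (\<lambda>x. \<Sum>i\<in>I. g i x)"
proof (induction I rule: infinite_finite_induct)
  case (infinite A) then show ?case by (simp add: gamble_const)
next
  case empty then show ?case by (simp add: gamble_const)
next
  case (insert a A)
  then show ?case using gamble_add[of "g a" "\<lambda>x. \<Sum>i\<in>A. g i x"] by simp
qed

lemma gamble_bound: "gamble u \<Longrightarrow> \<exists>B>0. \<forall>x. \<bar>u x\<bar> \<le> B"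
  unfolding gamble_def by (meson gt_ex order.strict_trans2 dual_order.strict_implies_order linorder_not_le order_le_less_trans)

lemma posiE: assumes "g \<in> posi A"
  obtains n :: nat and lam :: "nat \<Rightarrow> real" and fs where "n > 0" "\<forall>i<n. lam i > 0 \<and> fs i \<in> A" "g = (\<lambda>x. \<Sum>i<n. lam i * fs i x)"
proof -
  from assms have "\<exists>(n::nat) (lam::nat\<Rightarrow>real) fs. n > 0 \<and> (\<forall>i<n. lam i > 0 \<and> fs i \<in> A) \<and> g = (\<lambda>x. \<Sum>i<n. lam i * fs i x)"
    unfolding posi_def by simp
  then show ?thesis using that by (elim exE conjE) simp
qed

lemma posiI: "(n::nat) > 0 \<Longrightarrow> \<forall>i<n. (lam::nat\<Rightarrow>real) i > 0 \<and> fs i \<in> A \<Longrightarrow> g = (\<lambda>x. \<Sum>i<n. lam i * fs i x) \<Longrightarrow> g \<in> posi A"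
  unfolding posi_def mem_Collect_eq by (intro exI[of _ n] exI[of _ lam] exI[of _ fs]) simp

lemma posi_add: assumes "u \<in> posi A" "v \<in> posi A" shows "(\<lambda>x. u x + v x) \<in> posi A"
proof -
  obtain n :: nat and lam :: "nat \<Rightarrow> real" and fs where n: "n > 0" "\<forall>i<n. lam i > 0 \<and> fs i \<in> A" "u = (\<lambda>x. \<Sum>i<n. lam i * fs i x)"
    using assms(1) by (rule posiE)
  obtain m :: nat and lam2 :: "nat \<Rightarrow> real" and fs2 where m: "m > 0" "\<forall>i<m. lam2 i > 0 \<and> fs2 i \<in> A" "v = (\<lambda>x. \<Sum>i<m. lam2 i * fs2 i x)"
    using assms(2) by (rule posiE)
  define L where "L i = (if i < n then lam i else lam2 (i - n))" for i
  define F where "F i = (if i < n then fs i else fs2 (i - n))" for i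
  have "\<forall>i<n+m. L i > 0 \<and> F i \<in> A" using n m by (auto simp: L_def F_def)
  moreover have "(\<lambda>x. u x + v x) = (\<lambda>x. \<Sum>i<n+m. L i * F i x)"
    by (auto simp: sum_split_add n(3) m(3) L_def F_def)
  ultimately show ?thesis using n by (intro posiI[of "n+m" L F]) auto
qed

lemma posi_scale: assumes "u \<in> posi A" "t > 0" shows "(\<lambda>x. t * u x) \<in> posi A"
proof -
  obtain n :: nat and lam :: "nat \<Rightarrow> real" and fs where n: "n > 0" "\<forall>i<n. lam i > 0 \<and> fs i \<in> A" "u = (\<lambda>x. \<Sum>i<n. lam i * fs i x)"
    using assms(1) by (rule posiE)
  have "\<forall>i<n. t * lam i > 0 \<and> fs i \<in> A" using n assms(2) by auto
  moreover have "(\<lambda>x. t * u x) = (\<lambda>x. \<Sum>i<n. (t * lam i) * fs i x)"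
    by (auto simp: n(3) sum_distrib_left mult.assoc)
  ultimately show ?thesis using n by (intro posiI[of n "\<lambda>i. t * lam i" fs]) auto
qed

lemma posi_base: "u \<in> A \<Longrightarrow> u \<in> posi A"
  by (rule posiI[of 1 "\<lambda>_. 1" "\<lambda>_. u"]) auto

lemma posi_sub: assumes "\<And>u. u \<in> A \<Longrightarrow> u \<in> D"
  and add: "\<And>u v. u \<in> D \<Longrightarrow> v \<in> D \<Longrightarrow> (\<lambda>x. u x + v x) \<in> D"
  and sc: "\<And>u t. u \<in> D \<Longrightarrow> t > 0 \<Longrightarrow> (\<lambda>x. t * u x) \<in> D"
  shows "posi A \<subseteq> D"
proof
  fix g assume "g \<in> posi A"
  then obtain n :: nat and lam :: "nat \<Rightarrow> real" and fs where n: "n > 0" "\<forall>i<n. lam i > 0 \<and> fs i \<in> A" "g = (\<lambda>x. \<Sum>i<n. lam i * fs i x)"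
    by (rule posiE)
  have "\<forall>i<n. lam i > 0 \<and> fs i \<in> A \<Longrightarrow> n > 0 \<Longrightarrow> (\<lambda>x. \<Sum>i<n. lam i * fs i x) \<in> D"
  proof (induction n)
    case 0 then show ?case by simp
  next
    case (Suc k)
    have last: "(\<lambda>x. lam k * fs k x) \<in> D" using Suc.prems assms(1) sc by auto
    show ?case
    proof (cases "k = 0")
      case True then show ?thesis using last by simp
    next
      case False
      then have "(\<lambda>x. \<Sum>i<k. lam i * fs i x) \<in> D" using Suc by auto
      from add[OF this last] show ?thesis by simp
    qed
  qed
  then show "g \<in> D" using n by simp
qed

lemma posi_gamble: assumes "\<And>u. u \<in> A \<Longrightarrow> gamble u" "g \<in> posi A" shows "gamble g"
proof -
  obtain n :: nat and lam :: "nat \<Rightarrow> real" and fs where n: "n > 0" "\<forall>i<n. lam i > 0 \<and> fs i \<in> A" "g = (\<lambda>x. \<Sum>i<n. lam i * fs i x)"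
    using assms(2) by (rule posiE)
  show ?thesis unfolding n(3) by (rule gamble_sum) (use n assms(1) in \<open>auto intro: gamble_cmult\<close>)
qed



definition dcone :: "('a \<Rightarrow> real) set \<Rightarrow> bool" where
  "dcone D \<longleftrightarrow> (\<forall>u\<in>D. gamble u) \<and> (\<forall>u\<in>D. \<forall>v\<in>D. (\<lambda>x. u x + v x) \<in> D)
    \<and> (\<forall>u\<in>D. \<forall>t>0. (\<lambda>x. t * u x) \<in> D)
    \<and> (\<forall>u. gamble u \<and> (\<forall>x. u x \<ge> 0) \<and> u \<noteq> (\<lambda>x. 0) \<longrightarrow> u \<in> D)
    \<and> (\<forall>u. gamble u \<and> (\<forall>x. u x \<le> 0) \<longrightarrow> u \<notin> D)"

definition LE :: "('a \<Rightarrow> real) set \<Rightarrow> ('a \<Rightarrow> real) \<Rightarrow> real" where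
  "LE D u = Sup {\<mu>. (\<lambda>x. u x - \<mu>) \<in> D}"

context fixes D :: "('a \<Rightarrow> real) set" assumes D: "dcone D"
begin

lemma D_gamble: "u \<in> D \<Longrightarrow> gamble u" using D unfolding dcone_def by blast
lemma D_add: "u \<in> D \<Longrightarrow> v \<in> D \<Longrightarrow> (\<lambda>x. u x + v x) \<in> D" using D unfolding dcone_def by blast
lemma D_scale: "u \<in> D \<Longrightarrow> t > 0 \<Longrightarrow> (\<lambda>x. t * u x) \<in> D" using D unfolding dcone_def by blast
lemma D_pos: "gamble u \<Longrightarrow> (\<And>x. u x \<ge> 0) \<Longrightarrow> u \<noteq> (\<lambda>x. 0) \<Longrightarrow> u \<in> D" using D unfolding dcone_def by blast
lemma D_nonpos: "gamble u \<Longrightarrow> (\<And>x. u x \<le> 0) \<Longrightarrow> u \<notin> D" using D unfolding dcone_def by blast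

lemma D_const: "c > 0 \<Longrightarrow> (\<lambda>x. c) \<in> D"
  by (rule D_pos) (auto simp: gamble_const fun_eq_iff)

lemma S_down: assumes "(\<lambda>x. u x - \<mu>) \<in> D" "\<mu>' < \<mu>" shows "(\<lambda>x. u x - \<mu>') \<in> D"
proof -
  have "(\<lambda>x. (u x - \<mu>) + (\<mu> - \<mu>')) \<in> D" using D_add[OF assms(1) D_const[of "\<mu> - \<mu>'"]] assms(2) by simp
  then show ?thesis by simp
qed

lemma S_ne: assumes "gamble u" shows "\<exists>\<mu>. (\<lambda>x. u x - \<mu>) \<in> D"
proof -
  obtain B where B: "B > 0" "\<forall>x. \<bar>u x\<bar> \<le> B" using gamble_bound[OF assms] by blast
  have "(\<lambda>x. u x - (-B - 1)) \<in> D"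
  proof (rule D_pos)
    show "gamble (\<lambda>x. u x - (- B - 1))" using assms by (intro gamble_diff gamble_const)
    have lb: "\<And>x. - B \<le> u x" using B(2) by (metis abs_le_D2 minus_le_iff)
    then show "\<And>x. 0 \<le> u x - (- B - 1)" by (smt (verit))
    show "(\<lambda>x. u x - (- B - 1)) \<noteq> (\<lambda>x. 0)"
    proof
      assume "(\<lambda>x. u x - (- B - 1)) = (\<lambda>x. 0)"
      then have "u undefined - (- B - 1) = 0" by (rule fun_cong[where x=undefined, simplified])
      then show False using lb[of undefined] by simp
    qed
  qed
  then show ?thesis by blast
qed

lemma S_bound: assumes "gamble u" "\<forall>x. u x \<le> B" "(\<lambda>x. u x - \<mu>) \<in> D" shows "\<mu> < B"
proof (rule ccontr)
  assume "\<not> \<mu> < B"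
  then have "\<forall>x. u x - \<mu> \<le> 0" using assms(2) by (smt (verit))
  then have "(\<lambda>x. u x - \<mu>) \<notin> D" using assms(1) by (intro D_nonpos gamble_diff gamble_const) auto
  then show False using assms(3) by simp
qed

lemma S_bdd: assumes "gamble u" shows "bdd_above {\<mu>. (\<lambda>x. u x - \<mu>) \<in> D}"
proof -
  obtain B where B: "B > 0" "\<forall>x. \<bar>u x\<bar> \<le> B" using gamble_bound[OF assms] by blast
  then have "\<forall>x. u x \<le> B" by (simp add: abs_le_iff)
  then show ?thesis using S_bound[OF assms] unfolding bdd_above_def by (meson less_imp_le mem_Collect_eq)
qed

lemma LE_upper: "gamble u \<Longrightarrow> (\<lambda>x. u x - \<mu>) \<in> D \<Longrightarrow> \<mu> \<le> LE D u"
  unfolding LE_def by (rule cSup_upper) (auto intro: S_bdd)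

lemma LE_least: "gamble u \<Longrightarrow> (\<And>\<mu>. (\<lambda>x. u x - \<mu>) \<in> D \<Longrightarrow> \<mu> \<le> c) \<Longrightarrow> LE D u \<le> c"
  unfolding LE_def by (rule cSup_least) (use S_ne in auto)

lemma LE_in: assumes "gamble u" "\<mu> < LE D u" shows "(\<lambda>x. u x - \<mu>) \<in> D"
proof (rule ccontr)
  assume "(\<lambda>x. u x - \<mu>) \<notin> D"
  then have "\<And>\<mu>'. (\<lambda>x. u x - \<mu>') \<in> D \<Longrightarrow> \<mu>' \<le> \<mu>"
    using S_down by (meson not_le)
  then have "LE D u \<le> \<mu>" by (rule LE_least[OF assms(1)])
  then show False using assms(2) by simp
qed

lemma LE_super: assumes "gamble u" "gamble v" shows "LE D u + LE D v \<le> LE D (\<lambda>x. u x + v x)"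
proof -
  have g: "gamble (\<lambda>x. u x + v x)" using assms by (rule gamble_add)
  have "\<And>a b. (\<lambda>x. u x - a) \<in> D \<Longrightarrow> (\<lambda>x. v x - b) \<in> D \<Longrightarrow> a + b \<le> LE D (\<lambda>x. u x + v x)"
  proof -
    fix a b assume "(\<lambda>x. u x - a) \<in> D" "(\<lambda>x. v x - b) \<in> D"
    from D_add[OF this] have "(\<lambda>x. (u x + v x) - (a + b)) \<in> D" by (simp add: algebra_simps)
    then show "a + b \<le> LE D (\<lambda>x. u x + v x)" using LE_upper[OF g] by blast
  qed
  then have "\<And>a. (\<lambda>x. u x - a) \<in> D \<Longrightarrow> LE D v \<le> LE D (\<lambda>x. u x + v x) - a"
    by (intro LE_least[OF assms(2)]) (smt (verit))
  then have "\<And>a. (\<lambda>x. u x - a) \<in> D \<Longrightarrow> a \<le> LE D (\<lambda>x. u x + v x) - LE D v"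
    by (smt (verit))
  then have "LE D u \<le> LE D (\<lambda>x. u x + v x) - LE D v" by (rule LE_least[OF assms(1)])
  then show ?thesis by simp
qed

lemma LE_scale_le: assumes "gamble u" "t > 0" shows "t * LE D u \<le> LE D (\<lambda>x. t * u x)"
proof -
  have g: "gamble (\<lambda>x. t * u x)" using assms by (intro gamble_cmult)
  have "\<And>a. (\<lambda>x. u x - a) \<in> D \<Longrightarrow> a \<le> LE D (\<lambda>x. t * u x) / t"
  proof -
    fix a assume "(\<lambda>x. u x - a) \<in> D"
    from D_scale[OF this assms(2)] have "(\<lambda>x. t * u x - t * a) \<in> D" by (simp add: algebra_simps)
    then have "t * a \<le> LE D (\<lambda>x. t * u x)" using LE_upper[OF g] by blast
    then show "a \<le> LE D (\<lambda>x. t * u x) / t" using assms(2) by (simp add: field_simps)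
  qed
  then have "LE D u \<le> LE D (\<lambda>x. t * u x) / t" by (rule LE_least[OF assms(1)])
  then show ?thesis using assms(2) by (simp add: field_simps)
qed

lemma LE_scale: assumes "gamble u" "t > 0" shows "LE D (\<lambda>x. t * u x) = t * LE D u"
proof -
  have g: "gamble (\<lambda>x. t * u x)" using assms by (intro gamble_cmult)
  have "(1/t) * LE D (\<lambda>x. t * u x) \<le> LE D (\<lambda>x. (1/t) * (t * u x))"
    using LE_scale_le[OF g, of "1/t"] assms(2) by simp
  also have "(\<lambda>x. (1/t) * (t * u x)) = u" using assms(2) by (simp add: fun_eq_iff)
  finally have "LE D (\<lambda>x. t * u x) \<le> t * LE D u" using assms(2) by (simp add: field_simps)
  then show ?thesis using LE_scale_le[OF assms] by simp
qed

lemma LE_nonneg: assumes "gamble u" "\<And>x. u x \<ge> 0" shows "LE D u \<ge> 0"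
proof (rule ccontr)
  assume a: "\<not> LE D u \<ge> 0"
  define m where "m = LE D u / 2"
  have "m < 0" using a by (simp add: m_def)
  have "(\<lambda>x. u x - m) \<in> D"
  proof (rule D_pos)
    show "gamble (\<lambda>x. u x - m)" using assms by (intro gamble_diff gamble_const)
    show "\<And>x. 0 \<le> u x - m" using assms(2) \<open>m < 0\<close> by (smt (verit))
    show "(\<lambda>x. u x - m) \<noteq> (\<lambda>x. 0)"
    proof
      assume "(\<lambda>x. u x - m) = (\<lambda>x. 0)"
      then have "u undefined - m = 0" by (rule fun_cong[where x=undefined, simplified])
      then show False using assms(2)[of undefined] \<open>m < 0\<close> by simp
    qed
  qed
  then have "m \<le> LE D u" using LE_upper[OF assms(1)] by blast
  then show False using a by (simp add: m_def)
qed

lemma LE_mem: "u \<in> D \<Longrightarrow> LE D u \<ge> 0"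
  using LE_upper[of u 0] D_gamble by simp

lemma LE_const: "LE D (\<lambda>x. c) = c"
proof (rule antisym)
  show "LE D (\<lambda>x. c) \<le> c"
    by (rule LE_least[OF gamble_const]) (use S_bound[OF gamble_const, of c c] in \<open>auto simp: less_imp_le\<close>)
  have "\<And>\<mu>. \<mu> < c \<Longrightarrow> \<mu> \<le> LE D (\<lambda>x. c)"
    by (rule LE_upper[OF gamble_const]) (simp add: D_const)
  then show "c \<le> LE D (\<lambda>x. c)" by (meson dense_le)
qed

lemma LE_zero: "LE D (\<lambda>x. 0) = 0" using LE_const[of 0] by simp

end


lemma hb:
  fixes \<phi> :: "(nat \<Rightarrow> real) \<Rightarrow> real"
  assumes sub: "\<And>c d. \<phi> (\<lambda>i. c i + d i) \<le> \<phi> c + \<phi> d"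
    and hom: "\<And>t c. t > 0 \<Longrightarrow> \<phi> (\<lambda>i. t * c i) = t * \<phi> c"
    and zero: "\<phi> (\<lambda>i. 0) = 0"
  shows "\<exists>w. w 0 = - \<phi> (\<lambda>i. if i = 0 then -1 else 0) \<and>
           (\<forall>c. (\<Sum>i<Suc k. w i * c i) \<le> \<phi> (\<lambda>i. if i < Suc k then c i else 0))"
proof (induction k)
  case 0
  define a where "a = - \<phi> (\<lambda>i. if i = 0 then -1 else 0)"
  define e where "e = (\<lambda>i::nat. if i = 0 then (1::real) else 0)"
  define me where "me = (\<lambda>i::nat. if i = 0 then (-1::real) else 0)"
  have "\<phi> (\<lambda>i. e i + me i) \<le> \<phi> e + \<phi> me" by (rule sub)
  moreover have "(\<lambda>i. e i + me i) = (\<lambda>i. 0)" by (auto simp: e_def me_def)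
  ultimately have em: "0 \<le> \<phi> e + \<phi> me" using zero by simp
  have "\<forall>c. (\<Sum>i<Suc 0. a * c i) \<le> \<phi> (\<lambda>i. if i < Suc 0 then c i else 0)"
  proof
    fix c :: "nat \<Rightarrow> real"
    consider "c 0 > 0" | "c 0 < 0" | "c 0 = 0" by linarith
    then show "(\<Sum>i<Suc 0. a * c i) \<le> \<phi> (\<lambda>i. if i < Suc 0 then c i else 0)"
    proof cases
      case 1
      have "(\<lambda>i. if i < Suc 0 then c i else 0) = (\<lambda>i. c 0 * e i)" by (auto simp: e_def)
      then have "\<phi> (\<lambda>i. if i < Suc 0 then c i else 0) = c 0 * \<phi> e" using hom[OF 1] by simp
      moreover have "a * c 0 \<le> c 0 * \<phi> e"
      proof -
        have "0 \<le> c 0 * (\<phi> e + \<phi> me)" using em 1 by simp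
        then show ?thesis unfolding a_def me_def by (simp add: algebra_simps)
      qed
      ultimately show ?thesis by simp
    next
      case 2
      have "(\<lambda>i. if i < Suc 0 then c i else 0) = (\<lambda>i. (- c 0) * me i)" by (auto simp: me_def)
      then have "\<phi> (\<lambda>i. if i < Suc 0 then c i else 0) = (- c 0) * \<phi> me" using hom[of "- c 0"] 2 by simp
      then show ?thesis unfolding a_def me_def by simp
    next
      case 3
      have "(\<lambda>i. if i < Suc 0 then c i else 0) = (\<lambda>i. 0)" using 3 by auto
      then show ?thesis using 3 zero by simp
    qed
  qed
  then show ?case unfolding a_def by (intro exI[of _ "\<lambda>i. a"]) (simp add: a_def)
next
  case (Suc k)
  define m where "m = Suc k"
  from Suc.IH obtain w where w0: "w 0 = - \<phi> (\<lambda>i. if i = 0 then -1 else 0)"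
    and IH: "\<And>c. (\<Sum>i<m. w i * c i) \<le> \<phi> (\<lambda>i. if i < m then c i else 0)" unfolding m_def by blast
  define L where "L c = (\<Sum>i<m. w i * c i)" for c
  define R where "R c = (\<lambda>i. if i < m then c i else (0::real))" for c
  define em where "em = (\<lambda>i. if i = m then 1 else (0::real))"
  have IH': "L c \<le> \<phi> (R c)" for c using IH unfolding L_def R_def .
  have key: "L u - \<phi> (\<lambda>i. R u i - em i) \<le> \<phi> (\<lambda>i. R v i + em i) - L v" for u v
  proof -
    have "L u + L v = L (\<lambda>i. u i + v i)" unfolding L_def by (simp add: sum.distrib algebra_simps)
    also have "\<dots> \<le> \<phi> (R (\<lambda>i. u i + v i))" by (rule IH')
    also have "R (\<lambda>i. u i + v i) = (\<lambda>i. (R u i - em i) + (R v i + em i))" by (auto simp: R_def em_def)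
    also have "\<phi> \<dots> \<le> \<phi> (\<lambda>i. R u i - em i) + \<phi> (\<lambda>i. R v i + em i)" by (rule sub)
    finally show ?thesis by simp
  qed
  define V where "V = {L u - \<phi> (\<lambda>i. R u i - em i) | u. True}"
  define s where "s = Sup V"
  have Vne: "V \<noteq> {}" unfolding V_def by blast
  have Vbdd: "bdd_above V" unfolding V_def bdd_above_def using key[of _ "\<lambda>i. 0"] by blast
  have s_up: "L u - \<phi> (\<lambda>i. R u i - em i) \<le> s" for u
    unfolding s_def by (rule cSup_upper[OF _ Vbdd]) (auto simp: V_def)
  have s_lo: "s \<le> \<phi> (\<lambda>i. R v i + em i) - L v" for v
    unfolding s_def by (rule cSup_least[OF Vne]) (auto simp: V_def key)
  define w' where "w' = w(m := s)"
  have "\<forall>c. (\<Sum>i<Suc m. w' i * c i) \<le> \<phi> (\<lambda>i. if i < Suc m then c i else 0)"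
  proof
    fix c :: "nat \<Rightarrow> real"
    have sumeq: "(\<Sum>i<Suc m. w' i * c i) = L c + s * c m"
      unfolding L_def w'_def by simp
    have Req: "(\<lambda>i. if i < Suc m then c i else 0) = (\<lambda>i. R c i + c m * em i)"
      by (auto simp: R_def em_def fun_eq_iff less_Suc_eq)
    consider "c m > 0" | "c m < 0" | "c m = 0" by linarith
    then show "(\<Sum>i<Suc m. w' i * c i) \<le> \<phi> (\<lambda>i. if i < Suc m then c i else 0)"
    proof cases
      case 1
      define t where "t = c m"
      define u where "u = (\<lambda>i. c i / t)"
      have t: "t > 0" using 1 by (simp add: t_def)
      have Lu: "L u = L c / t" unfolding L_def u_def by (simp add: sum_divide_distrib)
      have "(\<lambda>i. R c i + c m * em i) = (\<lambda>i. t * (R u i + em i))"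
        using t by (auto simp: R_def u_def em_def t_def fun_eq_iff)
      then have "\<phi> (\<lambda>i. R c i + c m * em i) = t * \<phi> (\<lambda>i. R u i + em i)" using hom[OF t] by simp
      moreover have "t * (L u + s) \<le> t * \<phi> (\<lambda>i. R u i + em i)"
        using s_lo[of u] t by (intro mult_left_mono) auto
      moreover have "t * (L u + s) = L c + s * c m" using t unfolding Lu t_def by (simp add: field_simps)
      ultimately show ?thesis using sumeq Req by simp
    next
      case 2
      define t where "t = - c m"
      define u where "u = (\<lambda>i. c i / t)"
      have t: "t > 0" using 2 by (simp add: t_def)
      have Lu: "L u = L c / t" unfolding L_def u_def by (simp add: sum_divide_distrib)
      have "(\<lambda>i. R c i + c m * em i) = (\<lambda>i. t * (R u i - em i))"
        using t by (auto simp: R_def u_def em_def t_def fun_eq_iff)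
      then have "\<phi> (\<lambda>i. R c i + c m * em i) = t * \<phi> (\<lambda>i. R u i - em i)" using hom[OF t] by simp
      moreover have "t * (L u - s) \<le> t * \<phi> (\<lambda>i. R u i - em i)"
        using s_up[of u] t by (intro mult_left_mono) auto
      moreover have "t * (L u - s) = L c + s * c m" using t unfolding Lu t_def by (simp add: field_simps)
      ultimately show ?thesis using sumeq Req by simp
    next
      case 3
      have "(\<lambda>i. R c i + c m * em i) = R c" using 3 by simp
      then show ?thesis using sumeq Req IH'[of c] 3 by simp
    qed
  qed
  moreover have "w' 0 = - \<phi> (\<lambda>i. if i = 0 then -1 else 0)" using w0 by (simp add: w'_def m_def)
  ultimately show ?case unfolding m_def by blast
qed



lemma sum_delta_mult: fixes f :: "nat \<Rightarrow> real" shows "(\<Sum>i<N. (if i = k then a else 0) * f i) = (if k < N then a * f k else (0::real))"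
proof -
  have "(\<Sum>i<N. (if i = k then a else 0) * f i) = (\<Sum>i<N. if i = k then a * f k else 0)"
    by (rule sum.cong) auto
  then show ?thesis by (simp add: sum.delta[of "{..<N}" k "\<lambda>_. a * f k"])
qed

lemma sum_delta_mult': fixes f :: "nat \<Rightarrow> real" shows "(\<Sum>i<N. f i * (if i = k then a else 0)) = (if k < N then f k * a else (0::real))"
  using sum_delta_mult[where N=N and k=k and a=a and f=f] by (simp add: mult.commute)

lemma functional:
  fixes D :: "('a \<Rightarrow> real) set" and g :: "nat \<Rightarrow> 'a \<Rightarrow> real"
  assumes D: "dcone D" and gen: "\<And>k. k < N \<Longrightarrow> gamble (g k)" and N: "N > 0"
  shows "\<exists>w. w 0 = LE D (g 0) \<and> (\<forall>k<N. LE D (g k) \<le> w k \<and> w k \<le> - LE D (\<lambda>x. - g k x))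
     \<and> (\<forall>c. (\<forall>x. (\<Sum>k<N. c k * g k x) \<ge> 0) \<longrightarrow> (\<Sum>k<N. w k * c k) \<ge> 0)"
proof -
  define G where "G c = (\<lambda>x. \<Sum>k<N. c k * g k x)" for c
  have Gg: "gamble (G c)" for c unfolding G_def by (rule gamble_sum) (auto intro: gamble_cmult gen)
  have Gng: "gamble (\<lambda>x. - G c x)" for c using Gg by (rule gamble_minus)
  define \<phi> where "\<phi> c = - LE D (\<lambda>x. - G c x)" for c
  have sub: "\<phi> (\<lambda>i. c i + d i) \<le> \<phi> c + \<phi> d" for c d
  proof -
    have "(\<lambda>x. - G (\<lambda>i. c i + d i) x) = (\<lambda>x. - G c x + - G d x)"
      unfolding G_def by (auto simp: algebra_simps sum.distrib fun_eq_iff)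
    then show ?thesis unfolding \<phi>_def using LE_super[OF D Gng Gng, of c d] by simp
  qed
  have hom: "\<phi> (\<lambda>i. t * c i) = t * \<phi> c" if "t > 0" for t c
  proof -
    have "(\<lambda>x. - G (\<lambda>i. t * c i) x) = (\<lambda>x. t * (- G c x))"
      unfolding G_def by (auto simp: algebra_simps sum_distrib_left fun_eq_iff)
    then show ?thesis unfolding \<phi>_def using LE_scale[OF D Gng that, of c] by simp
  qed
  have zero: "\<phi> (\<lambda>i. 0) = 0" unfolding \<phi>_def G_def using LE_zero[OF D] by simp
  obtain w where w0: "w 0 = - \<phi> (\<lambda>i. if i = 0 then -1 else 0)"
    and wle: "\<And>c. (\<Sum>i<Suc (N - 1). w i * c i) \<le> \<phi> (\<lambda>i. if i < Suc (N - 1) then c i else 0)"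
    using hb[of \<phi> "N - 1", OF sub hom zero] by blast
  have NN: "Suc (N - 1) = N" using N by simp
  have wle': "(\<Sum>i<N. w i * c i) \<le> \<phi> c" for c
  proof -
    have "G (\<lambda>i. if i < N then c i else 0) = G c" unfolding G_def by (auto simp: fun_eq_iff)
    then show ?thesis using wle[of c] unfolding NN \<phi>_def by simp
  qed
  have "G (\<lambda>i. if i = 0 then -1 else 0) = (\<lambda>x. - g 0 x)"
    unfolding G_def using N by (auto simp: fun_eq_iff sum_delta_mult)
  then have W0: "w 0 = LE D (g 0)" using w0 unfolding \<phi>_def by simp
  have bnd: "LE D (g k) \<le> w k \<and> w k \<le> - LE D (\<lambda>x. - g k x)" if k: "k < N" for k
  proof
    have s1: "(\<Sum>i<N. w i * (if i = k then -1 else 0)) = - w k" using k by (simp add: sum_delta_mult')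
    have s2: "(\<Sum>i<N. w i * (if i = k then 1 else 0)) = w k" using k by (simp add: sum_delta_mult')
    have g1: "G (\<lambda>i. if i = k then -1 else 0) = (\<lambda>x. - g k x)"
      unfolding G_def using k by (auto simp: fun_eq_iff sum_delta_mult)
    have g2: "G (\<lambda>i. if i = k then 1 else 0) = g k"
      unfolding G_def using k by (auto simp: fun_eq_iff sum_delta_mult)
    show "LE D (g k) \<le> w k" using wle'[of "\<lambda>i. if i = k then -1 else 0"] unfolding s1 \<phi>_def g1 by simp
    show "w k \<le> - LE D (\<lambda>x. - g k x)" using wle'[of "\<lambda>i. if i = k then 1 else 0"] unfolding s2 \<phi>_def g2 by simp
  qed
  have pos: "(\<Sum>k<N. w k * c k) \<ge> 0" if "\<forall>x. (\<Sum>k<N. c k * g k x) \<ge> 0" for c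
  proof -
    have "(\<lambda>x. - G (\<lambda>i. - c i) x) = G c" unfolding G_def by (simp add: sum_negf)
    then have "\<phi> (\<lambda>i. - c i) = - LE D (G c)" unfolding \<phi>_def by simp
    moreover have "LE D (G c) \<ge> 0" using that by (intro LE_nonneg[OF D Gg]) (simp add: G_def)
    moreover have "(\<Sum>i<N. w i * (- c i)) = - (\<Sum>k<N. w k * c k)" by (simp add: sum_negf)
    ultimately show ?thesis using wle'[of "\<lambda>i. - c i"] by simp
  qed
  show ?thesis using W0 bnd pos by blast
qed



lemma Elp_dcone: assumes "coherent_lp C P" shows "dcone (E_lp C P)"
proof -
  obtain D where D: "coherent_D D" and PD: "\<forall>(f, B) \<in> C. P f B = lowprev_D D f B"
    and Cd: "C \<subseteq> cond_domain" using assms unfolding coherent_lp_def by blast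
  have Dadd: "\<And>u v. u \<in> D \<Longrightarrow> v \<in> D \<Longrightarrow> (\<lambda>x. u x + v x) \<in> D" using D unfolding coherent_D_def by blast
  have Dsc: "\<And>u t. u \<in> D \<Longrightarrow> t > 0 \<Longrightarrow> (\<lambda>x. t * u x) \<in> D" using D unfolding coherent_D_def by blast
  have Dpos: "\<And>u. gamble u \<Longrightarrow> (\<forall>x. u x \<ge> 0) \<Longrightarrow> u \<noteq> (\<lambda>x. 0) \<Longrightarrow> u \<in> D" using D unfolding coherent_D_def by blast
  have Dnp: "\<And>u. gamble u \<Longrightarrow> (\<forall>x. u x \<le> 0) \<Longrightarrow> u \<notin> D" using D unfolding coherent_D_def by blast
  define Ag where "Ag = {(\<lambda>x. (f x - \<mu>) * indicator B x) | f B \<mu>. (f, B) \<in> C \<and> ereal \<mu> < P f B}"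
  have EL: "E_lp C P = posi (Ag \<union> gambles_pos)" unfolding E_lp_def natext_set_def Ag_def by simp
  have Agg: "gamble u" if "u \<in> Ag" for u
    using that Cd unfolding Ag_def cond_domain_def
    by (auto intro!: gamble_mult gamble_diff gamble_const gamble_indicator)
  have AgD: "u \<in> D" if uA: "u \<in> Ag" for u
  proof -
    obtain f :: "'a \<Rightarrow> real" and B \<mu> where u: "u = (\<lambda>x. (f x - \<mu>) * indicator B x)" and fB: "(f, B) \<in> C" and lt: "ereal \<mu> < P f B"
    proof -
      from uA have "\<exists>f B \<mu>. u = (\<lambda>x. (f x - \<mu>) * indicator B x) \<and> (f, B) \<in> C \<and> ereal \<mu> < P f B"
        unfolding Ag_def by simp
      then show ?thesis using that by (elim exE conjE) simp
    qed
    have fg: "gamble f" and Bne: "B \<noteq> {}" using fB Cd unfolding cond_domain_def by auto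
    have "ereal \<mu> < Sup {ereal \<mu>' | \<mu>'. (\<lambda>x. (f x - \<mu>') * indicator B x) \<in> D}"
      using lt PD fB unfolding lowprev_D_def by auto
    then obtain y where "y \<in> {ereal \<mu>' | \<mu>'. (\<lambda>x. (f x - \<mu>') * indicator B x) \<in> D}" "ereal \<mu> < y"
      by (auto simp: less_Sup_iff)
    then obtain \<mu>' where m1: "(\<lambda>x. (f x - \<mu>') * indicator B x) \<in> D" and m2: "\<mu> < \<mu>'" by auto
    have "(\<lambda>x. (\<mu>' - \<mu>) * indicator B x) \<in> D"
    proof (rule Dpos)
      show "gamble (\<lambda>x. (\<mu>' - \<mu>) * indicator B x)" by (intro gamble_cmult gamble_indicator)
      show "\<forall>x. 0 \<le> (\<mu>' - \<mu>) * indicator B x" using m2 by (simp add: indicator_def)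
      obtain b where "b \<in> B" using Bne by blast
      then show "(\<lambda>x. (\<mu>' - \<mu>) * indicator B x) \<noteq> (\<lambda>x. 0)" using m2 by (auto simp: fun_eq_iff intro!: exI[of _ b])
    qed
    from Dadd[OF m1 this] show ?thesis unfolding u by (simp add: algebra_simps)
  qed
  have posD: "u \<in> D" if "u \<in> gambles_pos" for u using that Dpos unfolding gambles_pos_def by blast
  have sub: "E_lp C P \<subseteq> D" unfolding EL by (rule posi_sub) (use AgD posD Dadd Dsc in auto)
  show ?thesis unfolding dcone_def
  proof (intro conjI ballI allI impI)
    show "gamble u" if "u \<in> E_lp C P" for u
      using that unfolding EL by (rule posi_gamble[rotated]) (auto intro: Agg simp: gambles_pos_def)
    show "(\<lambda>x. u x + v x) \<in> E_lp C P" if "u \<in> E_lp C P" "v \<in> E_lp C P" for u v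
      using that unfolding EL by (rule posi_add)
    show "(\<lambda>x. t * u x) \<in> E_lp C P" if "u \<in> E_lp C P" "t > 0" for u t
      using that unfolding EL by (rule posi_scale)
    show "u \<in> E_lp C P" if "gamble u \<and> (\<forall>x. 0 \<le> u x) \<and> u \<noteq> (\<lambda>x. 0)" for u
      using that unfolding EL by (intro posi_base) (simp add: gambles_pos_def)
    show "u \<notin> E_lp C P" if "gamble u \<and> (\<forall>x. u x \<le> 0)" for u
      using that sub Dnp by blast
  qed
qed

lemma ereal_Sup_real: fixes S :: "real set" assumes "S \<noteq> {}" "bdd_above S"
  shows "Sup (ereal ` S) = ereal (Sup S)"
proof -
  have a: "(SUP a\<in>S. ereal a) \<le> ereal (Sup S)"
    by (rule SUP_least) (simp add: cSup_upper[OF _ assms(2)])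
  obtain s where s: "s \<in> S" using assms(1) by blast
  have b: "ereal s \<le> (SUP a\<in>S. ereal a)" using s by (rule SUP_upper)
  have "\<bar>SUP a\<in>S. ereal a\<bar> \<noteq> \<infinity>" using a b by auto
  then show ?thesis using ereal_Sup by metis
qed

lemma lowprev_LE: assumes "dcone D" "gamble u" shows "lowprev_D D u UNIV = ereal (LE D u)"
proof -
  have "{ereal \<mu> | \<mu>. (\<lambda>x. (u x - \<mu>) * indicator UNIV x) \<in> D} = ereal ` {\<mu>. (\<lambda>x. u x - \<mu>) \<in> D}"
    by auto
  then show ?thesis unfolding lowprev_D_def LE_def
    using ereal_Sup_real[OF _ S_bdd[OF assms]] S_ne[OF assms] by auto
qed



lemma decomp:
  fixes D1 :: "('a \<Rightarrow> real) set" and D2 :: "('b \<Rightarrow> real) set"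
  assumes d1: "dcone D1" and d2: "dcone D2"
    and q: "q \<in> ({(\<lambda>(x, y). f2 y * indicator A1 x) | f2 A1. f2 \<in> D2 \<and> A1 \<in> B1 \<union> {UNIV}} \<union>
      {(\<lambda>(x, y). f1 x * indicator A2 y) | f1 A2. f1 \<in> D1 \<and> A2 \<in> B2 \<union> {UNIV}}) \<union> gambles_pos"
  shows "\<exists>X Y R. gamble X \<and> gamble Y \<and> (X \<in> D1 \<or> (\<forall>x. 0 \<le> X x)) \<and> (Y \<in> D2 \<or> (\<forall>y. 0 \<le> Y y))
    \<and> (\<forall>p. 0 \<le> R p) \<and> (\<forall>x y. q (x, y) = X x * Y y + R (x, y))"
proof -
  consider (a) "\<exists>f2 A1. q = (\<lambda>(x, y). f2 y * indicator A1 x) \<and> f2 \<in> D2"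
    | (b) "\<exists>f1 A2. q = (\<lambda>(x, y). f1 x * indicator A2 y) \<and> f1 \<in> D1"
    | (c) "q \<in> gambles_pos"
    using q by blast
  then show ?thesis
  proof cases
    case a
    then obtain f2 A1 where q: "q = (\<lambda>(x, y). f2 y * indicator A1 x)" and f2: "f2 \<in> D2" by blast
    show ?thesis
      by (rule exI[of _ "indicator A1"], rule exI[of _ f2], rule exI[of _ "\<lambda>p. 0"])
        (use f2 D_gamble[OF d2 f2] in \<open>auto simp: q gamble_indicator\<close>)
  next
    case b
    then obtain f1 A2 where q: "q = (\<lambda>(x, y). f1 x * indicator A2 y)" and f1: "f1 \<in> D1" by blast
    show ?thesis
      by (rule exI[of _ f1], rule exI[of _ "indicator A2"], rule exI[of _ "\<lambda>p. 0"])
        (use f1 D_gamble[OF d1 f1] in \<open>auto simp: q gamble_indicator\<close>)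
  next
    case c
    then have "\<forall>p. 0 \<le> q p" unfolding gambles_pos_def by auto
    then show ?thesis
      by (intro exI[of _ "\<lambda>x. 0"] exI[of _ q]) (auto simp: gamble_const)
  qed
qed



lemma sum2: "(\<Sum>k<Suc (Suc n). g k) = g 0 + g 1 + (\<Sum>i<n. g (Suc (Suc i)))" for g :: "nat \<Rightarrow> real"
  unfolding sum.lessThan_Suc_shift by (simp add: add.assoc del: sum.lessThan_Suc)

lemma main_bound:
  fixes D1 :: "('a \<Rightarrow> real) set" and D2 :: "('b \<Rightarrow> real) set"
  assumes d1: "dcone D1" and d2: "dcone D2" and fg: "gamble f" and hg: "gamble h"
    and mem: "(\<lambda>(x, y). f x + h y - \<mu>) \<in> prod_D B1 B2 D1 D2"
  shows "\<mu> \<le> LE D1 f + LE D2 h"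
proof -
  let ?A = "({(\<lambda>(x, y). f2 y * indicator A1 x) | f2 A1. f2 \<in> D2 \<and> A1 \<in> B1 \<union> {UNIV}} \<union>
      {(\<lambda>(x, y). f1 x * indicator A2 y) | f1 A2. f1 \<in> D1 \<and> A2 \<in> B2 \<union> {UNIV}}) \<union> gambles_pos"
  have "(\<lambda>(x, y). f x + h y - \<mu>) \<in> posi ?A" using mem unfolding prod_D_def natext_set_def .
  then obtain n :: nat and lam :: "nat \<Rightarrow> real" and fs where
    n: "n > 0" and lf: "\<forall>i<n. lam i > 0 \<and> fs i \<in> ?A"
    and eq: "(\<lambda>(x, y). f x + h y - \<mu>) = (\<lambda>p. \<Sum>i<n. lam i * fs i p)" by (rule posiE)
  have "\<forall>i\<in>{..<n}. \<exists>t. gamble (fst t) \<and> gamble (fst (snd t)) \<and> (fst t \<in> D1 \<or> (\<forall>x. 0 \<le> fst t x))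
    \<and> (fst (snd t) \<in> D2 \<or> (\<forall>y. 0 \<le> fst (snd t) y))
    \<and> (\<forall>p. 0 \<le> snd (snd t) p) \<and> (\<forall>x y. fs i (x, y) = fst t x * fst (snd t) y + snd (snd t) (x, y))"
  proof
    fix i assume "i \<in> {..<n}"
    then have "fs i \<in> ?A" using lf by auto
    from decomp[OF d1 d2 this] obtain X Y R where
      "gamble X \<and> gamble Y \<and> (X \<in> D1 \<or> (\<forall>x. 0 \<le> X x)) \<and> (Y \<in> D2 \<or> (\<forall>y. 0 \<le> Y y))
        \<and> (\<forall>p. 0 \<le> R p) \<and> (\<forall>x y. fs i (x, y) = X x * Y y + R (x, y))" by blast
    then show "\<exists>t. gamble (fst t) \<and> gamble (fst (snd t)) \<and> (fst t \<in> D1 \<or> (\<forall>x. 0 \<le> fst t x))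
    \<and> (fst (snd t) \<in> D2 \<or> (\<forall>y. 0 \<le> fst (snd t) y))
    \<and> (\<forall>p. 0 \<le> snd (snd t) p) \<and> (\<forall>x y. fs i (x, y) = fst t x * fst (snd t) y + snd (snd t) (x, y))"
      by (intro exI[of _ "(X, Y, R)"]) simp
  qed
  then obtain T where T: "\<forall>i\<in>{..<n}. gamble (fst (T i)) \<and> gamble (fst (snd (T i))) \<and> (fst (T i) \<in> D1 \<or> (\<forall>x. 0 \<le> fst (T i) x))
    \<and> (fst (snd (T i)) \<in> D2 \<or> (\<forall>y. 0 \<le> fst (snd (T i)) y))
    \<and> (\<forall>p. 0 \<le> snd (snd (T i)) p) \<and> (\<forall>x y. fs i (x, y) = fst (T i) x * fst (snd (T i)) y + snd (snd (T i)) (x, y))"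
    by (rule bchoice[elim_format]) blast
  define X where "X i = fst (T i)" for i
  define Y where "Y i = fst (snd (T i))" for i
  define R where "R i = snd (snd (T i))" for i
  have Xg: "\<And>i. i < n \<Longrightarrow> gamble (X i)" and Yg: "\<And>i. i < n \<Longrightarrow> gamble (Y i)"
    and XD: "\<And>i. i < n \<Longrightarrow> X i \<in> D1 \<or> (\<forall>x. 0 \<le> X i x)"
    and YD: "\<And>i. i < n \<Longrightarrow> Y i \<in> D2 \<or> (\<forall>y. 0 \<le> Y i y)"
    and Rp: "\<And>i p. i < n \<Longrightarrow> 0 \<le> R i p"
    and fsd: "\<And>i x y. i < n \<Longrightarrow> fs i (x, y) = X i x * Y i y + R i (x, y)"
    using T unfolding X_def Y_def R_def by auto
  have pt: "f x + h y - \<mu> = (\<Sum>i<n. lam i * (X i x * Y i y + R i (x, y)))" for x y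
  proof -
    have "f x + h y - \<mu> = (\<Sum>i<n. lam i * fs i (x, y))" using fun_cong[OF eq, of "(x, y)"] by simp
    also have "\<dots> = (\<Sum>i<n. lam i * (X i x * Y i y + R i (x, y)))" by (rule sum.cong) (auto simp: fsd)
    finally show ?thesis .
  qed
  have LX: "LE D1 (X i) \<ge> 0" if "i < n" for i
    using XD[OF that] LE_mem[OF d1] LE_nonneg[OF d1 Xg[OF that]] by blast
  have LY: "LE D2 (Y i) \<ge> 0" if "i < n" for i
    using YD[OF that] LE_mem[OF d2] LE_nonneg[OF d2 Yg[OF that]] by blast
  define gy where "gy k = (case k of 0 \<Rightarrow> h | Suc 0 \<Rightarrow> (\<lambda>_. 1) | Suc (Suc i) \<Rightarrow> Y i)" for k
  have gyg: "gamble (gy k)" if "k < Suc (Suc n)" for k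
    using that Yg hg by (auto simp: gy_def gamble_const split: nat.split)
  obtain w2 where w20: "w2 0 = LE D2 (gy 0)"
    and w2b: "\<forall>k<Suc (Suc n). LE D2 (gy k) \<le> w2 k \<and> w2 k \<le> - LE D2 (\<lambda>x. - gy k x)"
    and w2p: "\<forall>c. (\<forall>y. (\<Sum>k<Suc (Suc n). c k * gy k y) \<ge> 0) \<longrightarrow> (\<Sum>k<Suc (Suc n). w2 k * c k) \<ge> 0"
    using functional[where D=D2 and g=gy and N="Suc (Suc n)", OF d2 gyg zero_less_Suc] by blast
  have w2h: "w2 0 = LE D2 h" using w20 by (simp add: gy_def)
  have w21: "w2 1 = 1" using w2b[rule_format, of 1] LE_const[OF d2, of 1] LE_const[OF d2, of "-1"]
    by (simp add: gy_def)
  have w2Y: "w2 (Suc (Suc i)) \<ge> 0" if "i < n" for i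
    using w2b[rule_format, of "Suc (Suc i)"] LY[OF that] that by (simp add: gy_def)
  have Hx: "LE D2 h + (f x - \<mu>) + (\<Sum>i<n. w2 (Suc (Suc i)) * (- lam i * X i x)) \<ge> 0" for x
  proof -
    define c where "c k = (case k of 0 \<Rightarrow> 1 | Suc 0 \<Rightarrow> f x - \<mu> | Suc (Suc i) \<Rightarrow> - lam i * X i x)" for k
    have "(\<Sum>k<Suc (Suc n). c k * gy k y) \<ge> 0" for y
    proof -
      have "(\<Sum>k<Suc (Suc n). c k * gy k y) = h y + (f x - \<mu>) + (\<Sum>i<n. - lam i * X i x * Y i y)"
        unfolding sum2 by (simp add: c_def gy_def)
      also have "\<dots> = (\<Sum>i<n. lam i * R i (x, y))"
        using pt[of x y] by (simp add: algebra_simps sum.distrib sum_negf sum_subtractf)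
      also have "\<dots> \<ge> 0" using Rp lf by (intro sum_nonneg) (simp add: less_imp_le)
      finally show ?thesis .
    qed
    then have "(\<Sum>k<Suc (Suc n). w2 k * c k) \<ge> 0" using w2p by blast
    then show ?thesis unfolding sum2 using w2h w21 by (simp add: c_def)
  qed
  define gx where "gx k = (case k of 0 \<Rightarrow> f | Suc 0 \<Rightarrow> (\<lambda>_. 1) | Suc (Suc i) \<Rightarrow> X i)" for k
  have gxg: "gamble (gx k)" if "k < Suc (Suc n)" for k
    using that Xg fg by (auto simp: gx_def gamble_const split: nat.split)
  obtain w1 where w10: "w1 0 = LE D1 (gx 0)"
    and w1b: "\<forall>k<Suc (Suc n). LE D1 (gx k) \<le> w1 k \<and> w1 k \<le> - LE D1 (\<lambda>x. - gx k x)"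
    and w1p: "\<forall>c. (\<forall>x. (\<Sum>k<Suc (Suc n). c k * gx k x) \<ge> 0) \<longrightarrow> (\<Sum>k<Suc (Suc n). w1 k * c k) \<ge> 0"
    using functional[where D=D1 and g=gx and N="Suc (Suc n)", OF d1 gxg zero_less_Suc] by blast
  have w1f: "w1 0 = LE D1 f" using w10 by (simp add: gx_def)
  have w11: "w1 1 = 1" using w1b[rule_format, of 1] LE_const[OF d1, of 1] LE_const[OF d1, of "-1"]
    by (simp add: gx_def)
  have w1X: "w1 (Suc (Suc i)) \<ge> 0" if "i < n" for i
    using w1b[rule_format, of "Suc (Suc i)"] LX[OF that] that by (simp add: gx_def)
  define d where "d k = (case k of 0 \<Rightarrow> 1 | Suc 0 \<Rightarrow> LE D2 h - \<mu> | Suc (Suc i) \<Rightarrow> - lam i * w2 (Suc (Suc i)))" for k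
  have "(\<Sum>k<Suc (Suc n). d k * gx k x) \<ge> 0" for x
  proof -
    have "(\<Sum>k<Suc (Suc n). d k * gx k x) = f x + (LE D2 h - \<mu>) + (\<Sum>i<n. - lam i * w2 (Suc (Suc i)) * X i x)"
      unfolding sum2 by (simp add: d_def gx_def)
    also have "\<dots> = LE D2 h + (f x - \<mu>) + (\<Sum>i<n. w2 (Suc (Suc i)) * (- lam i * X i x))"
      by (simp add: algebra_simps)
    finally show ?thesis using Hx[of x] by simp
  qed
  then have "(\<Sum>k<Suc (Suc n). w1 k * d k) \<ge> 0" using w1p by blast
  then have main: "LE D1 f + (LE D2 h - \<mu>) - (\<Sum>i<n. w1 (Suc (Suc i)) * (lam i * w2 (Suc (Suc i)))) \<ge> 0"
    unfolding sum2 using w1f w11 by (simp add: d_def sum_negf)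
  have "(\<Sum>i<n. w1 (Suc (Suc i)) * (lam i * w2 (Suc (Suc i)))) \<ge> 0"
    using w1X w2Y lf by (intro sum_nonneg) (simp add: less_imp_le)
  then show ?thesis using main by simp
qed



theorem corollary23:
  fixes B1 :: "'a set set" and B2 :: "'b set set"
    and C1 :: "(('a \<Rightarrow> real) \<times> 'a set) set" and P1 :: "('a \<Rightarrow> real) \<Rightarrow> 'a set \<Rightarrow> ereal"
    and C2 :: "(('b \<Rightarrow> real) \<times> 'b set) set" and P2 :: "('b \<Rightarrow> real) \<Rightarrow> 'b set \<Rightarrow> ereal"
    and f :: "'a \<Rightarrow> real" and h :: "'b \<Rightarrow> real"
  assumes "B1 \<subseteq> Pow UNIV - {{}}" and "B2 \<subseteq> Pow UNIV - {{}}"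
    and "coherent_lp C1 P1" and "coherent_lp C2 P2"
    and "gamble f" and "gamble h"
  shows "prod_lp B1 B2 C1 P1 C2 P2 (\<lambda>(x, y). f x + h y) UNIV
           = natext C1 P1 f UNIV + natext C2 P2 h UNIV"
proof -
  define D1 where "D1 = E_lp C1 P1"
  define D2 where "D2 = E_lp C2 P2"
  define PD where "PD = prod_D B1 B2 D1 D2"
  have d1: "dcone D1" unfolding D1_def by (rule Elp_dcone[OF assms(3)])
  have d2: "dcone D2" unfolding D2_def by (rule Elp_dcone[OF assms(4)])
  define a where "a = LE D1 f"
  define b where "b = LE D2 h"
  have n1: "natext C1 P1 f UNIV = ereal a"
    unfolding natext_def a_def D1_def[symmetric] by (rule lowprev_LE[OF d1 assms(5)])
  have n2: "natext C2 P2 h UNIV = ereal b"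
    unfolding natext_def b_def D2_def[symmetric] by (rule lowprev_LE[OF d2 assms(6)])
  define T where "T = {\<mu>. (\<lambda>(x, y). f x + h y - \<mu>) \<in> PD}"
  have fe: "(\<lambda>p. ((\<lambda>(x, y). f x + h y) p - \<mu>) * indicator UNIV p) = (\<lambda>(x, y). f x + h y - \<mu>)" for \<mu>
    by (auto simp: fun_eq_iff)
  have lhs: "prod_lp B1 B2 C1 P1 C2 P2 (\<lambda>(x, y). f x + h y) UNIV = Sup (ereal ` T)"
  proof -
    have "{ereal \<mu> | \<mu>. (\<lambda>p. ((\<lambda>(x, y). f x + h y) p - \<mu>) * indicator UNIV p) \<in> PD} = ereal ` T"
      unfolding fe T_def by auto
    then show ?thesis unfolding prod_lp_def lowprev_D_def D1_def[symmetric] D2_def[symmetric] PD_def[symmetric]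
      by simp
  qed
  have up: "\<mu> \<le> a + b" if "\<mu> \<in> T" for \<mu>
    using main_bound[OF d1 d2 assms(5,6), of \<mu> B1 B2] that unfolding T_def PD_def a_def b_def by simp
  have inT: "\<mu>1 + \<mu>2 \<in> T" if "\<mu>1 < a" "\<mu>2 < b" for \<mu>1 \<mu>2
  proof -
    have m1: "(\<lambda>x. f x - \<mu>1) \<in> D1" using LE_in[OF d1 assms(5)] that(1) unfolding a_def by blast
    have m2: "(\<lambda>y. h y - \<mu>2) \<in> D2" using LE_in[OF d2 assms(6)] that(2) unfolding b_def by blast
    let ?A = "({(\<lambda>(x, y). f2 y * indicator A1 x) | f2 A1. f2 \<in> D2 \<and> A1 \<in> B1 \<union> {UNIV}} \<union>
      {(\<lambda>(x, y). f1 x * indicator A2 y) | f1 A2. f1 \<in> D1 \<and> A2 \<in> B2 \<union> {UNIV}}) \<union> gambles_pos"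
    have e1: "(\<lambda>(x, y). (\<lambda>x. f x - \<mu>1) x * indicator UNIV y) \<in> ?A"
      by (rule UnI1, rule UnI2, rule CollectI, rule exI[of _ "\<lambda>x. f x - \<mu>1"], rule exI[of _ UNIV]) (simp add: m1)
    have e2: "(\<lambda>(x, y). (\<lambda>y. h y - \<mu>2) y * indicator UNIV x) \<in> ?A"
      by (rule UnI1, rule UnI1, rule CollectI, rule exI[of _ "\<lambda>y. h y - \<mu>2"], rule exI[of _ UNIV]) (simp add: m2)
    have "(\<lambda>p. (\<lambda>(x, y). (\<lambda>x. f x - \<mu>1) x * indicator UNIV y) p + (\<lambda>(x, y). (\<lambda>y. h y - \<mu>2) y * indicator UNIV x) p) \<in> posi ?A"
      by (rule posi_add[OF posi_base[OF e1] posi_base[OF e2]])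
    moreover have "(\<lambda>p. (\<lambda>(x, y). (\<lambda>x. f x - \<mu>1) x * indicator UNIV y) p + (\<lambda>(x, y). (\<lambda>y. h y - \<mu>2) y * indicator UNIV x) p)
       = (\<lambda>(x, y). f x + h y - (\<mu>1 + \<mu>2))" by (auto simp: fun_eq_iff)
    ultimately show ?thesis unfolding T_def PD_def prod_D_def natext_set_def by simp
  qed
  have Tne: "T \<noteq> {}" using inT[of "a - 1" "b - 1"] by auto
  have Tbdd: "bdd_above T" using up unfolding bdd_above_def by blast
  have supT: "Sup T = a + b"
  proof (rule antisym)
    show "Sup T \<le> a + b" using Tne up by (rule cSup_least)
    show "a + b \<le> Sup T"
    proof (rule ccontr)
      assume "\<not> a + b \<le> Sup T"
      define \<delta> where "\<delta> = (a + b - Sup T) / 4"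
      have "\<delta> > 0" using \<open>\<not> a + b \<le> Sup T\<close> by (simp add: \<delta>_def)
      have "(a - \<delta>) + (b - \<delta>) \<in> T" using inT[of "a - \<delta>" "b - \<delta>"] \<open>\<delta> > 0\<close> by linarith
      then have "(a - \<delta>) + (b - \<delta>) \<le> Sup T" using Tbdd by (rule cSup_upper)
      then show False using \<open>\<delta> > 0\<close> \<open>\<not> a + b \<le> Sup T\<close> unfolding \<delta>_def by (simp add: field_simps)
    qed
  qed
  show ?thesis unfolding lhs n1 n2 ereal_Sup_real[OF Tne Tbdd] supT by simp
qed


end
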